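(* Let $c\in\mathbb{R}^d\setminus\{0\}$. Let $a_1,\dots,a_n\in\mathbb{R}^d$ be independent Gaussian random vectors, each with independent coordinates of standard deviation $\sigma\le 1/(4\sqrt{d\ln n})$ and with $\|\mathbb{E}[a_i]\|\le1$. Let $0<\varepsilon\le\pi/10$. Then \[ \Pr\Big[\exists J\in\binom{[n]}{d-1}: \angle\big(c,\operatorname{cone}(a_j:j\in J)\big)<\varepsilon\Big]\le 4d\cdot n^d\cdot\frac{\varepsilon}{\sigma\sqrt{2\pi}}+n^{-d}. \]
   Context: For nonzero $s,s'$, $\angle(s,s')\in[0,\pi]$ is defined by $\cos\angle(s,s')\|s\|\|s'\|=s^\top s'$; for sets, $\angle(S,S')=\inf\{\angle(s,s'): s\in S\setminus\{0\},s'\in S'\setminus\{0\}\}$. $\operatorname{cone}(a_j:j\in J)$ is the set of nonnegative combinations of the $a_j$. *)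

theory Defs
  imports "HOL-Probability.Probability"
begin

definition vec_angle :: "'a::real_inner \<Rightarrow> 'a \<Rightarrow> real" where
  "vec_angle s s' = arccos ((s \<bullet> s') / (norm s * norm s'))"

text \<open>Angle between sets: infimum over nonzero elements, taken in the extended
  reals so that the infimum over an empty set is +infinity.\<close>
definition set_angle :: "'a::real_inner set \<Rightarrow> 'a set \<Rightarrow> ereal" where
  "set_angle S S' = (INF p \<in> {(s, s'). s \<in> S - {0} \<and> s' \<in> S' - {0}}.
                        ereal (vec_angle (fst p) (snd p)))"

definition cone_gen :: "('i \<Rightarrow> 'a::real_vector) \<Rightarrow> 'i set \<Rightarrow> 'a set" where
  "cone_gen a J = {\<Sum>j\<in>J. lam j *\<^sub>R a j | lam. \<forall>j\<in>J. 0 \<le> lam j}"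

text \<open>Joint law of n independent Gaussian vectors a_0,...,a_{n-1} in R^d:
  sample point \<omega> i k is coordinate k of a_i; all coordinates independent,
  coordinate k of a_i is normal with mean (mu i) $ k and standard deviation sigma.\<close>
definition gauss_vectors :: "nat \<Rightarrow> (nat \<Rightarrow> real^'d) \<Rightarrow> real \<Rightarrow> (nat \<Rightarrow> 'd \<Rightarrow> real) measure" where
  "gauss_vectors n mu \<sigma> =
     (\<Pi>\<^sub>M i\<in>{..<n}. \<Pi>\<^sub>M k\<in>UNIV. density lborel (normal_density ((mu i) $ k) \<sigma>))"

definition rvec :: "(nat \<Rightarrow> 'd \<Rightarrow> real) \<Rightarrow> nat \<Rightarrow> real^'d::finite" where
  "rvec \<omega> i = (\<chi> k. \<omega> i k)"

end

theory Submission
  imports Defs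
begin


lemma normal_density_le:
  assumes "\<sigma> > 0"
  shows "normal_density m \<sigma> x \<le> 1 / (\<sigma> * sqrt (2 * pi))"
proof -
  have s: "sqrt (2 * pi * \<sigma>\<^sup>2) = \<sigma> * sqrt (2 * pi)"
    using assms by (simp add: real_sqrt_mult)
  have "exp (- (x - m)\<^sup>2 / (2 * \<sigma>\<^sup>2)) \<le> 1" by simp
  then show ?thesis unfolding normal_density_def s
    using assms by (simp add: divide_right_mono)
qed

lemma gauss_interval:
  fixes \<alpha> b \<delta> m \<sigma> :: real
  assumes "\<sigma> > 0" "\<alpha> \<noteq> 0" "\<delta> \<ge> 0"
  shows "emeasure (density lborel (normal_density m \<sigma>)) {t. \<bar>\<alpha> * t + b\<bar> < \<delta>}
           \<le> ennreal (2 * \<delta> / (\<bar>\<alpha>\<bar> * \<sigma> * sqrt (2 * pi)))"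
proof -
  define S where "S = {t. \<bar>\<alpha> * t + b\<bar> < \<delta>}"
  define x0 where "x0 = - b / \<alpha>"
  define r where "r = \<delta> / \<bar>\<alpha>\<bar>"
  have Ssub: "S \<subseteq> {x0 - r .. x0 + r}"
  proof
    fix t assume "t \<in> S"
    then have "\<bar>\<alpha> * t + b\<bar> < \<delta>" by (simp add: S_def)
    moreover have "\<alpha> * t + b = \<alpha> * (t - x0)" using assms by (simp add: x0_def field_simps)
    ultimately have "\<bar>\<alpha>\<bar> * \<bar>t - x0\<bar> < \<delta>" by (simp add: abs_mult)
    then have "\<bar>t - x0\<bar> < r" using assms by (simp add: r_def field_simps)
    then show "t \<in> {x0 - r .. x0 + r}" by auto
  qed
  have Smeas: "S \<in> sets borel" unfolding S_def by measurable
  have "emeasure (density lborel (normal_density m \<sigma>)) S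
        = (\<integral>\<^sup>+ t. ennreal (normal_density m \<sigma> t) * indicator S t \<partial>lborel)"
    using Smeas by (simp add: emeasure_density)
  also have "\<dots> \<le> (\<integral>\<^sup>+ t. ennreal (1 / (\<sigma> * sqrt (2 * pi))) * indicator {x0 - r .. x0 + r} t \<partial>lborel)"
    apply (rule nn_integral_mono)
    using Ssub normal_density_le[OF assms(1)]
    by (auto simp: indicator_def intro!: ennreal_leI)
  also have "\<dots> = ennreal (1 / (\<sigma> * sqrt (2 * pi))) * emeasure lborel {x0 - r .. x0 + r}"
    by (subst nn_integral_cmult_indicator) auto
  also have "\<dots> = ennreal (1 / (\<sigma> * sqrt (2 * pi))) * ennreal (2 * r)"
    using assms by (simp add: r_def)
  also have "\<dots> = ennreal (2 * \<delta> / (\<bar>\<alpha>\<bar> * \<sigma> * sqrt (2 * pi)))"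
    using assms by (simp add: ennreal_mult'[symmetric] r_def field_simps)
  finally show ?thesis by (simp add: S_def)
qed

lemma gauss_tail:
  fixes m \<sigma> :: real
  assumes "\<sigma> > 0"
  shows "emeasure (density lborel (normal_density m \<sigma>)) {t. 1 \<le> \<bar>t - m\<bar>}
           \<le> ennreal (sqrt 2 * exp (- 1 / (4 * \<sigma>\<^sup>2)))"
proof -
  define S where "S = {t::real. 1 \<le> \<bar>t - m\<bar>}"
  define C where "C = sqrt 2 * exp (- 1 / (4 * \<sigma>\<^sup>2))"
  have Smeas: "S \<in> sets borel" unfolding S_def by measurable
  have pt: "normal_density m \<sigma> t \<le> C * normal_density m (sqrt 2 * \<sigma>) t" if "t \<in> S" for t
  proof -
    define s where "s = (t - m)\<^sup>2"
    have s1: "s \<ge> 1" using that unfolding S_def s_def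
      by (metis one_le_power power2_abs mem_Collect_eq)
    have e1: "sqrt (2 * pi * \<sigma>\<^sup>2) = \<sigma> * sqrt (2 * pi)"
      using assms by (simp add: real_sqrt_mult)
    have e2: "sqrt (2 * pi * (sqrt 2 * \<sigma>)\<^sup>2) = sqrt 2 * (\<sigma> * sqrt (2 * pi))"
      using assms by (simp add: real_sqrt_mult power_mult_distrib)
    have ex: "exp (- s / (2 * \<sigma>\<^sup>2)) \<le> exp (- 1 / (4 * \<sigma>\<^sup>2)) * exp (- s / (2 * (sqrt 2 * \<sigma>)\<^sup>2))"
    proof -
      have "- s / (2 * \<sigma>\<^sup>2) \<le> - 1 / (4 * \<sigma>\<^sup>2) + - s / (2 * (sqrt 2 * \<sigma>)\<^sup>2)"
        using assms s1 by (simp add: power_mult_distrib field_simps)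
      then show ?thesis by (simp add: exp_add[symmetric])
    qed
    have "normal_density m \<sigma> t = exp (- s / (2 * \<sigma>\<^sup>2)) / (\<sigma> * sqrt (2 * pi))"
      unfolding normal_density_def e1 s_def by simp
    also have "\<dots> \<le> exp (- 1 / (4 * \<sigma>\<^sup>2)) * exp (- s / (2 * (sqrt 2 * \<sigma>)\<^sup>2)) / (\<sigma> * sqrt (2 * pi))"
      using ex assms by (simp add: divide_right_mono)
    also have "\<dots> = C * normal_density m (sqrt 2 * \<sigma>) t"
      unfolding normal_density_def e2 C_def s_def using assms by (simp add: field_simps)
    finally show ?thesis .
  qed
  have "emeasure (density lborel (normal_density m \<sigma>)) S
        = (\<integral>\<^sup>+ t. ennreal (normal_density m \<sigma> t) * indicator S t \<partial>lborel)"
    using Smeas by (simp add: emeasure_density)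
  also have "\<dots> \<le> (\<integral>\<^sup>+ t. ennreal C * ennreal (normal_density m (sqrt 2 * \<sigma>) t) \<partial>lborel)"
    apply (rule nn_integral_mono)
    using pt by (auto simp: indicator_def ennreal_mult'[symmetric] C_def intro!: ennreal_leI)
  also have "\<dots> = ennreal C * (\<integral>\<^sup>+ t. ennreal (normal_density m (sqrt 2 * \<sigma>) t) \<partial>lborel)"
    by (rule nn_integral_cmult) simp
  also have "(\<integral>\<^sup>+ t. ennreal (normal_density m (sqrt 2 * \<sigma>) t) \<partial>lborel) = 1"
  proof -
    interpret P: prob_space "density lborel (normal_density m (sqrt 2 * \<sigma>))"
      by (rule prob_space_normal_density) (use assms in simp)
    have "emeasure (density lborel (normal_density m (sqrt 2 * \<sigma>))) UNIV = 1"
      using P.emeasure_space_1 by simp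
    then show ?thesis by (simp add: emeasure_density)
  qed
  finally show ?thesis by (simp add: S_def C_def)
qed



lemma measurable_vec_lambda_PiM:
  fixes N :: "'d::finite \<Rightarrow> real measure"
  assumes "\<And>k. sets (N k) = sets borel"
  shows "(\<lambda>y. (\<chi> l. y l) :: real^'d) \<in> borel_measurable (PiM UNIV N)"
proof (subst borel_measurable_euclidean_space, intro ballI)
  fix i :: "real^'d" assume "i \<in> Basis"
  then obtain k where i: "i = axis k 1" unfolding Basis_vec_def by auto
  have "(\<lambda>y. y k) \<in> measurable (PiM UNIV N) (N k)"
    by (rule measurable_component_singleton) simp
  then have "(\<lambda>y. y k) \<in> borel_measurable (PiM UNIV N)"
    using measurable_cong_sets[where M="PiM UNIV N", OF refl assms[of k]] by simp
  then show "(\<lambda>y. (\<chi> l. y l) \<bullet> i) \<in> borel_measurable (PiM UNIV N)"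
    unfolding i inner_axis by simp
qed



lemma exists_big_coord:
  fixes w :: "real^'d::finite"
  assumes "norm w = 1"
  shows "\<exists>l. 1 / sqrt (real CARD('d)) \<le> \<bar>w $ l\<bar>"
proof -
  define A where "A = (\<lambda>k. \<bar>w $ k\<bar>) ` (UNIV :: 'd set)"
  have fA: "finite A" "A \<noteq> {}" by (auto simp: A_def)
  have "Max A \<in> A" by (rule Max_in[OF fA])
  then obtain l where lA: "Max A = \<bar>w $ l\<bar>" unfolding A_def by blast
  have l: "\<bar>w $ k\<bar> \<le> \<bar>w $ l\<bar>" for k
  proof -
    have "\<bar>w $ k\<bar> \<in> A" unfolding A_def by blast
    then have "\<bar>w $ k\<bar> \<le> Max A" by (rule Max_ge[OF fA(1)])
    then show ?thesis using lA by simp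
  qed
  have "1 = (norm w)\<^sup>2" using assms by simp
  also have "\<dots> = (\<Sum>k\<in>UNIV. (w $ k)\<^sup>2)" by (simp add: norm_vec_def L2_set_def sum_nonneg)
  also have "\<dots> \<le> (\<Sum>k\<in>(UNIV::'d set). (w $ l)\<^sup>2)"
    by (intro sum_mono) (metis abs_ge_zero l power2_abs power_mono)
  also have "\<dots> = real CARD('d) * (w $ l)\<^sup>2" by simp
  finally have h: "1 \<le> real CARD('d) * \<bar>w $ l\<bar>\<^sup>2" by simp
  have "1 / sqrt (real CARD('d)) \<le> \<bar>w $ l\<bar>"
  proof -
    have c: "real CARD('d) > 0" by simp
    have "sqrt 1 \<le> sqrt (real CARD('d) * \<bar>w $ l\<bar>\<^sup>2)" using h by (rule real_sqrt_le_mono)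
    then have "1 \<le> sqrt (real CARD('d)) * \<bar>w $ l\<bar>" by (simp add: real_sqrt_mult)
    then show ?thesis using c by (simp add: field_simps)
  qed
  then show ?thesis by blast
qed



lemma gauss_vec:
  fixes w m :: "real^'d::finite" and \<sigma> \<delta> :: real
  assumes sp: "\<sigma> > 0" and w1: "norm w = 1" and dp: "\<delta> \<ge> 0"
  shows "emeasure (PiM UNIV (\<lambda>k. density lborel (normal_density (m$k) \<sigma>)))
          {y \<in> space (PiM UNIV (\<lambda>k. density lborel (normal_density (m$k) \<sigma>))). \<bar>w \<bullet> (\<chi> l. y l)\<bar> < \<delta>}
        \<le> ennreal (2 * \<delta> * sqrt (real CARD('d)) / (\<sigma> * sqrt (2 * pi)))"
proof -
  define Nk where "Nk = (\<lambda>k. density lborel (normal_density (m$k) \<sigma>))"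
  have Nkp: "prob_space (Nk k)" for k unfolding Nk_def by (rule prob_space_normal_density) (use sp in simp)
  have Nks: "sets (Nk k) = sets borel" for k unfolding Nk_def by simp
  interpret PS: product_sigma_finite Nk
    unfolding product_sigma_finite_def using Nkp prob_space_imp_sigma_finite by blast
  obtain l where l: "1 / sqrt (real CARD('d)) \<le> \<bar>w $ l\<bar>" using exists_big_coord[OF w1] by blast
  have D0: "real CARD('d) > 0" by simp
  have wl0: "w $ l \<noteq> 0" using l D0 by (auto simp: field_simps)
  define C where "C = 2 * \<delta> * sqrt (real CARD('d)) / (\<sigma> * sqrt (2 * pi))"
  define S where "S = {y \<in> space (PiM UNIV Nk). \<bar>w \<bullet> (\<chi> l. y l)\<bar> < \<delta>}"
  have f: "(\<lambda>y. \<bar>w \<bullet> (\<chi> l. y l)\<bar>) \<in> borel_measurable (PiM UNIV Nk)"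
    using measurable_vec_lambda_PiM[of Nk, OF Nks] by measurable
  have "S = (\<lambda>y. \<bar>w \<bullet> (\<chi> l. y l)\<bar>) -` {..<\<delta>} \<inter> space (PiM UNIV Nk)"
    unfolding S_def by auto
  then have Smeas: "S \<in> sets (PiM UNIV Nk)"
    using measurable_sets[OF f, of "{..<\<delta>}"] by simp
  have U: "(UNIV :: 'd set) = insert l (UNIV - {l})" by auto
  have "emeasure (PiM UNIV Nk) S = (\<integral>\<^sup>+ y. indicator S y \<partial>PiM UNIV Nk)"
    using Smeas by simp
  also have "\<dots> = (\<integral>\<^sup>+ y. indicator S y \<partial>PiM (insert l (UNIV - {l})) Nk)"
    using U by simp
  also have "\<dots> = (\<integral>\<^sup>+ x. (\<integral>\<^sup>+ t. indicator S (x(l := t)) \<partial>Nk l) \<partial>PiM (UNIV - {l}) Nk)"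
    apply (rule PS.product_nn_integral_insert)
    using Smeas U by auto
  also have "\<dots> \<le> (\<integral>\<^sup>+ x. ennreal C \<partial>PiM (UNIV - {l}) Nk)"
  proof (rule nn_integral_mono)
    fix x assume x: "x \<in> space (PiM (UNIV - {l}) Nk)"
    define b where "b = (\<Sum>k\<in>UNIV - {l}. w $ k * x k)"
    define T where "T = {t. \<bar>w $ l * t + b\<bar> < \<delta>}"
    have Tm: "T \<in> sets (Nk l)" unfolding T_def Nks by measurable
    have ind: "indicator S (x(l := t)) \<le> (indicator T t :: ennreal)" for t
    proof -
      have "w \<bullet> (\<chi> k. (x(l := t)) k) = (\<Sum>k\<in>UNIV. w $ k * (x(l := t)) k)"
        by (simp add: inner_vec_def)
      also have "\<dots> = w $ l * t + b"
        unfolding b_def by (subst sum.remove[of UNIV l]) (auto intro!: sum.cong)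
      finally have "x(l := t) \<in> S \<Longrightarrow> t \<in> T" unfolding S_def T_def by simp
      then show ?thesis by (auto simp: indicator_def)
    qed
    have "(\<integral>\<^sup>+ t. indicator S (x(l := t)) \<partial>Nk l) \<le> (\<integral>\<^sup>+ t. indicator T t \<partial>Nk l)"
      by (rule nn_integral_mono) (rule ind)
    also have "\<dots> = emeasure (Nk l) T" using Tm by simp
    also have "\<dots> \<le> ennreal (2 * \<delta> / (\<bar>w $ l\<bar> * \<sigma> * sqrt (2 * pi)))"
      unfolding T_def Nk_def by (rule gauss_interval[OF sp wl0 dp])
    also have "\<dots> \<le> ennreal C"
    proof (rule ennreal_leI)
      have "1 / \<bar>w $ l\<bar> \<le> sqrt (real CARD('d))"
        using l wl0 D0 by (simp add: field_simps)
      then have "2 * \<delta> / (\<sigma> * sqrt (2 * pi)) * (1 / \<bar>w $ l\<bar>)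
                 \<le> 2 * \<delta> / (\<sigma> * sqrt (2 * pi)) * sqrt (real CARD('d))"
        by (rule mult_left_mono) (use sp dp in simp)
      then show "2 * \<delta> / (\<bar>w $ l\<bar> * \<sigma> * sqrt (2 * pi)) \<le> C"
        unfolding C_def by (simp add: field_simps)
    qed
    finally show "(\<integral>\<^sup>+ t. indicator S (x(l := t)) \<partial>Nk l) \<le> ennreal C" .
  qed
  also have "\<dots> = ennreal C"
  proof -
    interpret PP: prob_space "PiM (UNIV - {l}) Nk" by (rule prob_space_PiM) (rule Nkp)
    show ?thesis by (simp add: PP.emeasure_space_1)
  qed
  finally show ?thesis unfolding S_def C_def Nk_def .
qed



lemma rat_approx:
  fixes lam :: "nat \<Rightarrow> real"
  assumes "finite J" "\<eta> > 0"
  shows "\<exists>lam'\<in>PiE J (\<lambda>_. \<rat>). \<forall>k\<in>J. lam k \<le> lam' k \<and> lam' k < lam k + \<eta>"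
proof -
  have "\<forall>k. \<exists>q. q \<in> \<rat> \<and> lam k < q \<and> q < lam k + \<eta>"
    using Rats_dense_in_real assms(2) by (metis less_add_same_cancel1)
  then obtain f where f: "\<And>k. f k \<in> \<rat> \<and> lam k < f k \<and> f k < lam k + \<eta>" by metis
  show ?thesis
    by (rule bexI[of _ "restrict f J"]) (use f in \<open>auto intro: less_imp_le\<close>)
qed

lemma sum_approx:
  fixes a :: "nat \<Rightarrow> 'a::real_normed_vector"
  assumes "\<And>k. k \<in> J \<Longrightarrow> \<bar>lam' k - lam k\<bar> \<le> \<eta>"
  shows "norm ((\<Sum>k\<in>J. lam' k *\<^sub>R a k) - (\<Sum>k\<in>J. lam k *\<^sub>R a k)) \<le> \<eta> * (\<Sum>k\<in>J. norm (a k))"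
proof -
  have "norm ((\<Sum>k\<in>J. lam' k *\<^sub>R a k) - (\<Sum>k\<in>J. lam k *\<^sub>R a k))
        = norm (\<Sum>k\<in>J. (lam' k - lam k) *\<^sub>R a k)"
    by (simp add: sum_subtractf scaleR_diff_left)
  also have "\<dots> \<le> (\<Sum>k\<in>J. norm ((lam' k - lam k) *\<^sub>R a k))" by (rule norm_sum)
  also have "\<dots> \<le> (\<Sum>k\<in>J. \<eta> * norm (a k))"
    by (intro sum_mono) (simp add: assms mult_right_mono)
  also have "\<dots> = \<eta> * (\<Sum>k\<in>J. norm (a k))" by (simp add: sum_distrib_left)
  finally show ?thesis .
qed

lemma one_minus_cos_le: "1 - cos (x::real) \<le> x\<^sup>2 / 2"
proof -
  have "cos x = 1 - 2 * sin (x/2) ^ 2" using cos_double_sin[of "x/2"] by simp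
  moreover have "sin (x/2) ^ 2 \<le> (x/2)^2"
    using abs_sin_x_le_abs_x[of "x/2"] by (metis abs_ge_zero power2_abs power_mono)
  ultimately show ?thesis by (simp add: power_divide)
qed

lemma angle_iff:
  fixes c :: "real^'d::finite" and a :: "nat \<Rightarrow> real^'d"
  assumes c0: "c \<noteq> 0" and e0: "0 < \<epsilon>" and epi: "\<epsilon> < pi"
  shows "set_angle {c} (cone_gen a J) < ereal \<epsilon> \<longleftrightarrow>
         (\<exists>lam. (\<forall>j\<in>J. 0 \<le> lam j) \<and>
             cos \<epsilon> * (norm c * norm (\<Sum>j\<in>J. lam j *\<^sub>R a j)) < c \<bullet> (\<Sum>j\<in>J. lam j *\<^sub>R a j))"
proof
  assume "set_angle {c} (cone_gen a J) < ereal \<epsilon>"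
  then obtain p where p: "p \<in> {(s, s'). s \<in> {c} - {0} \<and> s' \<in> cone_gen a J - {0}}"
    and pl: "ereal (vec_angle (fst p) (snd p)) < ereal \<epsilon>"
    unfolding set_angle_def by (auto simp: INF_less_iff)
  obtain x where px: "p = (c, x)" and x0: "x \<noteq> 0" and xc: "x \<in> cone_gen a J" using p by auto
  obtain lam where lam: "\<forall>j\<in>J. 0 \<le> lam j" and xs: "x = (\<Sum>j\<in>J. lam j *\<^sub>R a j)"
    using xc unfolding cone_gen_def by auto
  define t where "t = (c \<bullet> x) / (norm c * norm x)"
  have ncx: "norm c * norm x > 0" using c0 x0 by simp
  have "\<bar>c \<bullet> x\<bar> \<le> norm c * norm x" by (rule Cauchy_Schwarz_ineq2)
  then have t1: "-1 \<le> t" "t \<le> 1" unfolding t_def using ncx by (auto simp: field_simps abs_le_iff)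
  have "arccos t < \<epsilon>" using pl px unfolding vec_angle_def t_def by simp
  then have "cos \<epsilon> < cos (arccos t)"
    using cos_mono_less_eq[of \<epsilon> "arccos t"] arccos_bounded[OF t1] e0 epi by simp
  then have "cos \<epsilon> < t" using t1 by simp
  then have "cos \<epsilon> * (norm c * norm x) < c \<bullet> x" unfolding t_def using ncx by (simp add: field_simps)
  then show "\<exists>lam. (\<forall>j\<in>J. 0 \<le> lam j) \<and>
             cos \<epsilon> * (norm c * norm (\<Sum>j\<in>J. lam j *\<^sub>R a j)) < c \<bullet> (\<Sum>j\<in>J. lam j *\<^sub>R a j)"
    using lam xs by blast
next
  assume "\<exists>lam. (\<forall>j\<in>J. 0 \<le> lam j) \<and>
             cos \<epsilon> * (norm c * norm (\<Sum>j\<in>J. lam j *\<^sub>R a j)) < c \<bullet> (\<Sum>j\<in>J. lam j *\<^sub>R a j)"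
  then obtain lam where lam: "\<forall>j\<in>J. 0 \<le> lam j"
    and g: "cos \<epsilon> * (norm c * norm (\<Sum>j\<in>J. lam j *\<^sub>R a j)) < c \<bullet> (\<Sum>j\<in>J. lam j *\<^sub>R a j)"
    by blast
  define x where "x = (\<Sum>j\<in>J. lam j *\<^sub>R a j)"
  have x0: "x \<noteq> 0" using g unfolding x_def by auto
  have xc: "x \<in> cone_gen a J" unfolding cone_gen_def x_def using lam by blast
  define t where "t = (c \<bullet> x) / (norm c * norm x)"
  have ncx: "norm c * norm x > 0" using c0 x0 by simp
  have "\<bar>c \<bullet> x\<bar> \<le> norm c * norm x" by (rule Cauchy_Schwarz_ineq2)
  then have t1: "-1 \<le> t" "t \<le> 1" unfolding t_def using ncx by (auto simp: field_simps abs_le_iff)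
  have "cos \<epsilon> < t" unfolding t_def using g ncx by (simp add: x_def field_simps)
  then have "arccos t < arccos (cos \<epsilon>)"
    by (intro arccos_less_arccos) (use t1 in auto)
  also have "arccos (cos \<epsilon>) = \<epsilon>" using e0 epi by (simp add: arccos_cos)
  finally have va: "vec_angle c x < \<epsilon>" unfolding vec_angle_def t_def .
  have "set_angle {c} (cone_gen a J) \<le> ereal (vec_angle (fst (c, x)) (snd (c, x)))"
    unfolding set_angle_def by (rule INF_lower) (use c0 x0 xc in auto)
  also have "\<dots> < ereal \<epsilon>" using va by simp
  finally show "set_angle {c} (cone_gen a J) < ereal \<epsilon>" .
qed



lemma angle_rat:
  fixes c :: "real^'d::finite" and a :: "nat \<Rightarrow> real^'d"
  assumes fJ: "finite J" and c0: "c \<noteq> 0" and cos0: "0 \<le> cos \<epsilon>"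
  shows "(\<exists>lam. (\<forall>j\<in>J. 0 \<le> lam j) \<and>
             cos \<epsilon> * (norm c * norm (\<Sum>j\<in>J. lam j *\<^sub>R a j)) < c \<bullet> (\<Sum>j\<in>J. lam j *\<^sub>R a j))
     \<longleftrightarrow> (\<exists>lam\<in>PiE J (\<lambda>_. \<rat>). (\<forall>j\<in>J. 0 \<le> lam j) \<and>
             cos \<epsilon> * (norm c * norm (\<Sum>j\<in>J. lam j *\<^sub>R a j)) < c \<bullet> (\<Sum>j\<in>J. lam j *\<^sub>R a j))"
proof
  assume "\<exists>lam. (\<forall>j\<in>J. 0 \<le> lam j) \<and>
             cos \<epsilon> * (norm c * norm (\<Sum>j\<in>J. lam j *\<^sub>R a j)) < c \<bullet> (\<Sum>j\<in>J. lam j *\<^sub>R a j)"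
  then obtain lam where lam: "\<forall>j\<in>J. 0 \<le> lam j"
    and g: "cos \<epsilon> * (norm c * norm (\<Sum>j\<in>J. lam j *\<^sub>R a j)) < c \<bullet> (\<Sum>j\<in>J. lam j *\<^sub>R a j)"
    by blast
  define x where "x = (\<Sum>j\<in>J. lam j *\<^sub>R a j)"
  define \<gamma> where "\<gamma> = c \<bullet> x - cos \<epsilon> * (norm c * norm x)"
  have g0: "\<gamma> > 0" using g unfolding \<gamma>_def x_def by simp
  define S where "S = (\<Sum>k\<in>J. norm (a k))"
  have S0: "S \<ge> 0" unfolding S_def by (simp add: sum_nonneg)
  have nc: "norm c > 0" using c0 by simp
  define \<eta> where "\<eta> = \<gamma> / (2 * norm c * (S + 1))"
  have eta0: "\<eta> > 0" unfolding \<eta>_def using g0 nc S0 by simp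
  obtain lam' where lam': "lam' \<in> PiE J (\<lambda>_. \<rat>)" and ap: "\<forall>k\<in>J. lam k \<le> lam' k \<and> lam' k < lam k + \<eta>"
    using rat_approx[OF fJ eta0, of lam] by blast
  define x' where "x' = (\<Sum>j\<in>J. lam' j *\<^sub>R a j)"
  have "norm (x' - x) \<le> \<eta> * S"
    unfolding x'_def x_def S_def by (rule sum_approx) (use ap in force)
  also have "\<eta> * S < \<gamma> / (2 * norm c)"
  proof -
    have "\<eta> * S = \<gamma> / (2 * norm c) * (S / (S + 1))" unfolding \<eta>_def by (simp add: field_simps)
    also have "\<dots> < \<gamma> / (2 * norm c) * 1"
      by (rule mult_strict_left_mono) (use S0 g0 nc in auto)
    finally show ?thesis by simp
  qed
  finally have d: "2 * norm c * norm (x' - x) < \<gamma>" using nc by (simp add: field_simps)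
  have i1: "c \<bullet> x' \<ge> c \<bullet> x - norm c * norm (x' - x)"
  proof -
    have "c \<bullet> x' = c \<bullet> x + c \<bullet> (x' - x)" by (simp add: inner_diff_right)
    moreover have "\<bar>c \<bullet> (x' - x)\<bar> \<le> norm c * norm (x' - x)" by (rule Cauchy_Schwarz_ineq2)
    ultimately show ?thesis by linarith
  qed
  have i2: "cos \<epsilon> * (norm c * norm x') \<le> cos \<epsilon> * (norm c * norm x) + norm c * norm (x' - x)"
  proof -
    have "norm x' \<le> norm x + norm (x' - x)" by (metis norm_triangle_sub add.commute)
    then have "norm c * norm x' \<le> norm c * norm x + norm c * norm (x' - x)"
      using nc by (simp add: distrib_left[symmetric])
    then have "cos \<epsilon> * (norm c * norm x') \<le> cos \<epsilon> * (norm c * norm x) + cos \<epsilon> * (norm c * norm (x' - x))"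
      using cos0 by (simp add: distrib_left[symmetric] mult_left_mono)
    moreover have "cos \<epsilon> * (norm c * norm (x' - x)) \<le> norm c * norm (x' - x)"
      using cos_le_one[of \<epsilon>] by (intro mult_left_le_one_le) (use nc cos0 in auto)
    ultimately show ?thesis by linarith
  qed
  have "cos \<epsilon> * (norm c * norm x') < c \<bullet> x'" using i1 i2 d unfolding \<gamma>_def by linarith
  moreover have "\<forall>j\<in>J. 0 \<le> lam' j" using lam ap by force
  ultimately show "\<exists>lam\<in>PiE J (\<lambda>_. \<rat>). (\<forall>j\<in>J. 0 \<le> lam j) \<and>
             cos \<epsilon> * (norm c * norm (\<Sum>j\<in>J. lam j *\<^sub>R a j)) < c \<bullet> (\<Sum>j\<in>J. lam j *\<^sub>R a j)"
    using lam' unfolding x'_def by blast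
qed blast



lemma geom:
  fixes c :: "real^'d::finite" and a :: "nat \<Rightarrow> real^'d"
  assumes fJ: "finite J" and cJ: "card J = CARD('d) - 1"
    and na: "\<And>k. k \<in> J \<Longrightarrow> norm (a k) \<le> 1 + sqrt (real CARD('d))"
    and c0: "c \<noteq> 0" and e0: "0 < \<epsilon>"
    and g: "cos \<epsilon> * (norm c * norm (\<Sum>j\<in>J. lam j *\<^sub>R a j)) < c \<bullet> (\<Sum>j\<in>J. lam j *\<^sub>R a j)"
  shows "\<exists>j\<in>J. \<exists>\<mu>\<in>PiE J (\<lambda>_. \<rat>).
           1 < \<bar>\<mu> j\<bar> * (2 * (real CARD('d) - 1) * sqrt (real CARD('d))) \<and>
           norm (c /\<^sub>R norm c - (\<Sum>k\<in>J. \<mu> k *\<^sub>R a k)) < \<epsilon>"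
proof -
  define D where "D = real CARD('d)"
  define K where "K = 2 * (D - 1) * sqrt D"
  define R0 where "R0 = 1 + sqrt D"
  define x where "x = (\<Sum>j\<in>J. lam j *\<^sub>R a j)"
  have x0: "x \<noteq> 0" using g unfolding x_def by auto
  have nc: "norm c > 0" and nx: "norm x > 0" using c0 x0 by auto
  define u where "u = c /\<^sub>R norm c"
  define \<mu>0 where "\<mu>0 = (\<lambda>j. lam j / norm x)"
  define y where "y = (\<Sum>j\<in>J. \<mu>0 j *\<^sub>R a j)"
  have yx: "y = x /\<^sub>R norm x"
    unfolding y_def x_def \<mu>0_def by (simp add: scaleR_sum_right divide_inverse_commute)
  have ny: "norm y = 1" and nu: "norm u = 1" using yx nx nc u_def by auto
  have uy: "u \<bullet> y > cos \<epsilon>"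
  proof -
    have h: "u \<bullet> y = (c \<bullet> x) / (norm c * norm x)" unfolding yx u_def by (simp add: field_simps)
    have "cos \<epsilon> * (norm c * norm x) < c \<bullet> x" using g unfolding x_def .
    then have "cos \<epsilon> < (c \<bullet> x) / (norm c * norm x)"
      by (subst pos_less_divide_eq) (use nc nx in auto)
    then show ?thesis using h by simp
  qed
  have "(norm (u - y))\<^sup>2 = (norm u)\<^sup>2 - 2 * (u \<bullet> y) + (norm y)\<^sup>2"
    by (simp add: power2_norm_eq_inner inner_diff_left inner_diff_right inner_commute)
  also have "\<dots> = 2 - 2 * (u \<bullet> y)" using nu ny by simp
  also have "\<dots> < 2 - 2 * cos \<epsilon>" using uy by simp
  also have "\<dots> \<le> \<epsilon>\<^sup>2" using one_minus_cos_le[of \<epsilon>] by simp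
  finally have "(norm (u - y))\<^sup>2 < \<epsilon>\<^sup>2" .
  then have uyd: "norm (u - y) < \<epsilon>" using e0 by (simp add: power_less_imp_less_base)
  have Jne: "J \<noteq> {}" using ny unfolding y_def by auto
  have cJ1: "card J \<ge> 1" using Jne fJ by (simp add: Suc_le_eq card_gt_0_iff)
  have Dc: "real (card J) = D - 1" using cJ cJ1 unfolding D_def by simp
  have D2: "D \<ge> 2" using Dc cJ1 by simp
  have sD: "sqrt D > 1" using D2 by simp
  have "1 \<le> (\<Sum>k\<in>J. \<bar>\<mu>0 k\<bar> * R0)"
  proof -
    have "1 = norm y" using ny by simp
    also have "\<dots> \<le> (\<Sum>k\<in>J. norm (\<mu>0 k *\<^sub>R a k))" unfolding y_def by (rule norm_sum)
    also have "\<dots> \<le> (\<Sum>k\<in>J. \<bar>\<mu>0 k\<bar> * R0)"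
      by (intro sum_mono) (simp add: na R0_def D_def mult_left_mono)
    finally show ?thesis .
  qed
  then obtain j where jJ: "j \<in> J" and jbig: "1 \<le> \<bar>\<mu>0 j\<bar> * (D - 1) * R0"
  proof -
    assume *: "\<And>j. j \<in> J \<Longrightarrow> 1 \<le> \<bar>\<mu>0 j\<bar> * (D - 1) * R0 \<Longrightarrow> thesis"
    show thesis
    proof (rule ccontr)
      assume "\<not> thesis"
      then have lt: "\<bar>\<mu>0 k\<bar> * R0 < 1 / (D - 1)" if "k \<in> J" for k
      proof -
        have "\<not> (1 \<le> \<bar>\<mu>0 k\<bar> * (D - 1) * R0)" using *[OF that] \<open>\<not> thesis\<close> by blast
        then have "\<bar>\<mu>0 k\<bar> * (D - 1) * R0 < 1" by simp
        then have "\<bar>\<mu>0 k\<bar> * R0 * (D - 1) < 1" by (simp add: mult_ac)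
        then show ?thesis by (subst pos_less_divide_eq) (use D2 in auto)
      qed
      have "(\<Sum>k\<in>J. \<bar>\<mu>0 k\<bar> * R0) < (\<Sum>k\<in>J. 1 / (D - 1))"
        by (rule sum_strict_mono[OF fJ Jne lt])
      also have "\<dots> = 1" using Dc D2 by simp
      finally show False using \<open>1 \<le> (\<Sum>k\<in>J. \<bar>\<mu>0 k\<bar> * R0)\<close> by simp
    qed
  qed
  have KR: "(D - 1) * R0 < K"
  proof -
    have "(D - 1) * R0 < (D - 1) * (2 * sqrt D)"
      by (rule mult_strict_left_mono) (use D2 sD in \<open>auto simp: R0_def\<close>)
    then show ?thesis unfolding K_def by (simp add: mult_ac)
  qed
  have m0: "\<bar>\<mu>0 j\<bar> > 0"
  proof (rule ccontr)
    assume "\<not> \<bar>\<mu>0 j\<bar> > 0" then have "\<mu>0 j = 0" by simp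
    then show False using jbig by simp
  qed
  have "\<bar>\<mu>0 j\<bar> * ((D - 1) * R0) < \<bar>\<mu>0 j\<bar> * K" using KR m0 by simp
  then have mK: "1 < \<bar>\<mu>0 j\<bar> * K" using jbig by (simp add: mult.assoc)
  have K0: "K > 0" unfolding K_def using D2 sD by simp
  define \<gamma>1 where "\<gamma>1 = \<bar>\<mu>0 j\<bar> * K - 1"
  define \<gamma>2 where "\<gamma>2 = \<epsilon> - norm (u - y)"
  define S where "S = (\<Sum>k\<in>J. norm (a k))"
  have S0: "S \<ge> 0" unfolding S_def by (simp add: sum_nonneg)
  define \<eta> where "\<eta> = min (\<gamma>1 / (2 * K)) (\<gamma>2 / (S + 1))"
  have g1: "\<gamma>1 > 0" and g2: "\<gamma>2 > 0" using mK uyd unfolding \<gamma>1_def \<gamma>2_def by auto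
  have eta0: "\<eta> > 0" unfolding \<eta>_def using g1 g2 K0 S0 by simp
  obtain \<mu> where \<mu>: "\<mu> \<in> PiE J (\<lambda>_. \<rat>)" and ap: "\<forall>k\<in>J. \<mu>0 k \<le> \<mu> k \<and> \<mu> k < \<mu>0 k + \<eta>"
    using rat_approx[OF fJ eta0, of \<mu>0] by blast
  have "\<bar>\<mu> j\<bar> \<ge> \<bar>\<mu>0 j\<bar> - \<eta>" using ap jJ by force
  then have "\<bar>\<mu> j\<bar> * K \<ge> (\<bar>\<mu>0 j\<bar> - \<eta>) * K" using K0 by (simp add: mult_right_mono)
  moreover have "\<eta> * K \<le> \<gamma>1 / 2"
  proof -
    have "\<eta> \<le> \<gamma>1 / (2 * K)" unfolding \<eta>_def by simp
    then have "\<eta> * K \<le> \<gamma>1 / (2 * K) * K" using K0 by (intro mult_right_mono) auto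
    moreover have "\<gamma>1 / (2 * K) * K = \<gamma>1 / 2" using K0 by simp
    ultimately show ?thesis by linarith
  qed
  moreover have "(\<bar>\<mu>0 j\<bar> - \<eta>) * K = \<bar>\<mu>0 j\<bar> * K - \<eta> * K" by (simp add: left_diff_distrib)
  moreover have "\<And>P Q Rr g. P - Q \<le> Rr \<Longrightarrow> Q \<le> g / 2 \<Longrightarrow> 0 < g \<Longrightarrow> g = P - 1 \<Longrightarrow> 1 < (Rr::real)"
    by linarith
  ultimately have A: "1 < \<bar>\<mu> j\<bar> * K" using g1 unfolding \<gamma>1_def by metis
  have "norm ((\<Sum>k\<in>J. \<mu> k *\<^sub>R a k) - y) \<le> \<eta> * S"
    unfolding y_def S_def by (rule sum_approx) (use ap in force)
  also have "\<eta> * S < \<gamma>2"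
  proof -
    have "\<eta> \<le> \<gamma>2 / (S + 1)" unfolding \<eta>_def by simp
    then have "\<eta> * S \<le> \<gamma>2 / (S + 1) * S" using S0 by (rule mult_right_mono)
    also have "\<dots> = \<gamma>2 * (S / (S + 1))" by simp
    also have "\<dots> < \<gamma>2 * 1" by (rule mult_strict_left_mono) (use S0 g2 in auto)
    finally show ?thesis by simp
  qed
  finally have B0: "norm ((\<Sum>k\<in>J. \<mu> k *\<^sub>R a k) - y) < \<gamma>2" .
  have "norm (u - (\<Sum>k\<in>J. \<mu> k *\<^sub>R a k)) \<le> norm (u - y) + norm ((\<Sum>k\<in>J. \<mu> k *\<^sub>R a k) - y)"
  proof -
    have "u - (\<Sum>k\<in>J. \<mu> k *\<^sub>R a k) = (u - y) - ((\<Sum>k\<in>J. \<mu> k *\<^sub>R a k) - y)" by simp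
    then show ?thesis by (metis norm_triangle_ineq4)
  qed
  then have B: "norm (u - (\<Sum>k\<in>J. \<mu> k *\<^sub>R a k)) < \<epsilon>" using B0 unfolding \<gamma>2_def by simp
  show ?thesis using A B jJ \<mu> unfolding K_def D_def u_def by blast
qed



definition Nv :: "(nat \<Rightarrow> real^'d::finite) \<Rightarrow> real \<Rightarrow> nat \<Rightarrow> ('d \<Rightarrow> real) measure" where
  "Nv mu \<sigma> i = PiM UNIV (\<lambda>k. density lborel (normal_density (mu i $ k) \<sigma>))"

lemma gauss_vectors_Nv: "gauss_vectors n mu \<sigma> = PiM {..<n} (Nv mu \<sigma>)"
  unfolding gauss_vectors_def Nv_def by simp

lemma Nv_prob: "\<sigma> > 0 \<Longrightarrow> prob_space (Nv mu \<sigma> i)"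
  unfolding Nv_def by (intro prob_space_PiM prob_space_normal_density) simp

lemma rvec_meas:
  assumes "i < n"
  shows "(\<lambda>\<omega>. rvec \<omega> i :: real^'d::finite) \<in> borel_measurable (gauss_vectors n mu \<sigma>)"
proof -
  have 1: "(\<lambda>\<omega>. \<omega> i) \<in> measurable (PiM {..<n} (Nv mu \<sigma>)) (Nv mu \<sigma> i)"
    by (rule measurable_component_singleton) (use assms in simp)
  have 2: "(\<lambda>y. (\<chi> l. y l) :: real^'d) \<in> borel_measurable (Nv mu \<sigma> i)"
    unfolding Nv_def by (rule measurable_vec_lambda_PiM) simp
  have "(\<lambda>\<omega>. (\<chi> l. \<omega> i l) :: real^'d) \<in> borel_measurable (PiM {..<n} (Nv mu \<sigma>))"
    using measurable_comp[OF 1 2] by (simp add: comp_def)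
  then show ?thesis unfolding gauss_vectors_Nv rvec_def .
qed

lemma sum_rvec_meas:
  assumes "J \<subseteq> {..<n}"
  shows "(\<lambda>\<omega>. (\<Sum>k\<in>J. lam k *\<^sub>R rvec \<omega> k) :: real^'d::finite) \<in> borel_measurable (gauss_vectors n mu \<sigma>)"
  by (rule borel_measurable_sum, rule borel_measurable_scaleR) (use assms in \<open>auto intro!: rvec_meas\<close>)



lemma F_meas:
  fixes u :: "real^'d::finite"
  assumes JI: "J \<subseteq> {..<n}" and fJ: "finite J"
  shows "{\<omega> \<in> space (gauss_vectors n mu \<sigma>). \<exists>\<mu>\<in>PiE J (\<lambda>_. \<rat>). 1 < \<bar>\<mu> j\<bar> * K \<and>
            norm (u - (\<Sum>k\<in>J. \<mu> k *\<^sub>R rvec \<omega> k)) < \<epsilon>} \<in> sets (gauss_vectors n mu \<sigma>)"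
proof -
  let ?M = "gauss_vectors n mu \<sigma>"
  have eq: "{\<omega> \<in> space ?M. \<exists>\<mu>\<in>PiE J (\<lambda>_. \<rat>). 1 < \<bar>\<mu> j\<bar> * K \<and>
            norm (u - (\<Sum>k\<in>J. \<mu> k *\<^sub>R rvec \<omega> k)) < \<epsilon>}
     = (\<Union>\<mu>\<in>PiE J (\<lambda>_. \<rat>). {\<omega> \<in> space ?M. 1 < \<bar>\<mu> j\<bar> * K \<and>
            norm (u - (\<Sum>k\<in>J. \<mu> k *\<^sub>R rvec \<omega> k)) < \<epsilon>})" by blast
  have cnt: "countable (PiE J (\<lambda>_. \<rat>) :: (nat \<Rightarrow> real) set)"
    by (rule countable_PiE) (use fJ countable_rat in blast)+
  have "{\<omega> \<in> space ?M. 1 < \<bar>\<mu> j\<bar> * K \<and> norm (u - (\<Sum>k\<in>J. \<mu> k *\<^sub>R rvec \<omega> k)) < \<epsilon>} \<in> sets ?M" for \<mu>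
  proof -
    have f0: "(\<lambda>\<omega>. u - (\<Sum>k\<in>J. \<mu> k *\<^sub>R rvec \<omega> k)) \<in> borel_measurable ?M"
      by (rule borel_measurable_diff[OF borel_measurable_const sum_rvec_meas[OF JI]])
    have f: "(\<lambda>\<omega>. norm (u - (\<Sum>k\<in>J. \<mu> k *\<^sub>R rvec \<omega> k))) \<in> borel_measurable ?M"
      using measurable_compose[OF f0 borel_measurable_norm] .
    have ms: "(\<lambda>\<omega>. norm (u - (\<Sum>k\<in>J. \<mu> k *\<^sub>R rvec \<omega> k))) -` {..<\<epsilon>} \<inter> space ?M \<in> sets ?M"
      by (rule measurable_sets[OF f]) (rule lessThan_borel)
    show ?thesis
    proof (cases "1 < \<bar>\<mu> j\<bar> * K")
      case True
      have "{\<omega> \<in> space ?M. 1 < \<bar>\<mu> j\<bar> * K \<and> norm (u - (\<Sum>k\<in>J. \<mu> k *\<^sub>R rvec \<omega> k)) < \<epsilon>}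
         = (\<lambda>\<omega>. norm (u - (\<Sum>k\<in>J. \<mu> k *\<^sub>R rvec \<omega> k))) -` {..<\<epsilon>} \<inter> space ?M"
        using True by blast
      then show ?thesis using ms by (simp only:)
    next
      case False
      have "{\<omega> \<in> space ?M. 1 < \<bar>\<mu> j\<bar> * K \<and> norm (u - (\<Sum>k\<in>J. \<mu> k *\<^sub>R rvec \<omega> k)) < \<epsilon>} = {}"
        using False by blast
      then show ?thesis by (simp only: sets.empty_sets)
    qed
  qed
  then show ?thesis unfolding eq by (rule sets.countable_UN''[OF cnt])
qed



lemma F_bound:
  fixes u :: "real^'d::finite"
  assumes sp: "\<sigma> > 0" and e0: "\<epsilon> > 0" and K0: "K > 0" and JI: "J \<subseteq> {..<n}"
    and fJ: "finite J" and jJ: "j \<in> J" and cJ: "card J = CARD('d) - 1"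
  shows "emeasure (gauss_vectors n mu \<sigma>) {\<omega> \<in> space (gauss_vectors n mu \<sigma>). \<exists>\<mu>\<in>PiE J (\<lambda>_. \<rat>). 1 < \<bar>\<mu> j\<bar> * K \<and>
            norm (u - (\<Sum>k\<in>J. \<mu> k *\<^sub>R rvec \<omega> k)) < \<epsilon>}
         \<le> ennreal (2 * (\<epsilon> * K) * sqrt (real CARD('d)) / (\<sigma> * sqrt (2 * pi)))"
proof -
  let ?N = "Nv mu \<sigma>"
  define F where "F = {\<omega> \<in> space (gauss_vectors n mu \<sigma>). \<exists>\<mu>\<in>PiE J (\<lambda>_. \<rat>). 1 < \<bar>\<mu> j\<bar> * K \<and>
            norm (u - (\<Sum>k\<in>J. \<mu> k *\<^sub>R rvec \<omega> k)) < \<epsilon>}"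
  define C where "C = 2 * (\<epsilon> * K) * sqrt (real CARD('d)) / (\<sigma> * sqrt (2 * pi))"
  have Fm: "F \<in> sets (gauss_vectors n mu \<sigma>)" unfolding F_def by (rule F_meas[OF JI fJ])
  have GN: "gauss_vectors n mu \<sigma> = PiM {..<n} ?N" by (rule gauss_vectors_Nv)
  have I: "{..<n} = insert j ({..<n} - {j})" using JI jJ by auto
  have GI: "gauss_vectors n mu \<sigma> = PiM (insert j ({..<n} - {j})) ?N"
    unfolding GN by (rule arg_cong[where f="\<lambda>I. PiM I ?N", OF I])
  have FmI: "F \<in> sets (PiM (insert j ({..<n} - {j})) ?N)" using Fm unfolding GI .
  interpret PS: product_sigma_finite ?N
    unfolding product_sigma_finite_def using Nv_prob[OF sp] prob_space_imp_sigma_finite by blast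
  have jn: "j < n" using JI jJ by auto
  have "emeasure (gauss_vectors n mu \<sigma>) F = emeasure (PiM (insert j ({..<n} - {j})) ?N) F"
    unfolding GI ..
  also have "\<dots> = (\<integral>\<^sup>+ \<omega>. indicator F \<omega> \<partial>PiM (insert j ({..<n} - {j})) ?N)"
    by (rule nn_integral_indicator[OF FmI, symmetric])
  also have "\<dots> = (\<integral>\<^sup>+ x. (\<integral>\<^sup>+ y. indicator F (x(j := y)) \<partial>?N j) \<partial>PiM ({..<n} - {j}) ?N)"
    by (rule PS.product_nn_integral_insert) (use FmI in auto)
  also have "\<dots> \<le> (\<integral>\<^sup>+ x. ennreal C \<partial>PiM ({..<n} - {j}) ?N)"
  proof (rule nn_integral_mono)
    fix x assume x: "x \<in> space (PiM ({..<n} - {j}) ?N)"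
    define H where "H = insert u ((\<lambda>k. rvec x k) ` (J - {j}))"
    have fH: "finite H" unfolding H_def using fJ by simp
    have cJ1: "card J \<ge> 1" using fJ jJ by (metis One_nat_def Suc_leI card_gt_0_iff empty_iff)
    have "card H \<le> Suc (card ((\<lambda>k. rvec x k) ` (J - {j})))" unfolding H_def by (simp add: card_insert_if fJ)
    also have "\<dots> \<le> Suc (card (J - {j}))" by (simp add: card_image_le fJ)
    also have "\<dots> = card J" using fJ jJ cJ1 by (simp add: card_Diff_singleton)
    finally have "card H < CARD('d)" using cJ cJ1 by linarith
    then have dimlt: "dim H < DIM(real^'d)" using dim_le_card'[OF fH] by simp
    obtain w0 where w0: "w0 \<noteq> 0" and ow0: "\<And>v. v \<in> span H \<Longrightarrow> orthogonal w0 v"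
      using orthogonal_to_subspace_exists[OF dimlt] by metis
    define w where "w = w0 /\<^sub>R norm w0"
    have nw: "norm w = 1" unfolding w_def using w0 by simp
    have ow: "w \<bullet> v = 0" if "v \<in> span H" for v
      using ow0[OF that] unfolding w_def orthogonal_def by simp
    define T where "T = {y \<in> space (?N j). \<bar>w \<bullet> (\<chi> l. y l)\<bar> < \<epsilon> * K}"
    have Tm: "T \<in> sets (?N j)"
    proof -
      have f: "(\<lambda>y. \<bar>w \<bullet> (\<chi> l. y l)\<bar>) \<in> borel_measurable (?N j)"
        using measurable_vec_lambda_PiM[of "\<lambda>k. density lborel (normal_density (mu j $ k) \<sigma>)"]
        unfolding Nv_def by measurable
      have "T = (\<lambda>y. \<bar>w \<bullet> (\<chi> l. y l)\<bar>) -` {..<\<epsilon> * K} \<inter> space (?N j)" unfolding T_def by blast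
      then show ?thesis using measurable_sets[OF f lessThan_borel] by (simp only:)
    qed
    have ind: "indicator F (x(j := y)) \<le> (indicator T y :: ennreal)" for y
    proof (cases "x(j := y) \<in> F")
      case False then show ?thesis by simp
    next
      case True
      then have xs: "x(j := y) \<in> space (PiM {..<n} ?N)" unfolding F_def GN by blast
      then have ys: "y \<in> space (?N j)" using jn unfolding space_PiM by (metis PiE_mem fun_upd_same lessThan_iff)
      obtain \<mu> where \<mu>: "\<mu> \<in> PiE J (\<lambda>_. \<rat>)" and m1: "1 < \<bar>\<mu> j\<bar> * K"
        and md: "norm (u - (\<Sum>k\<in>J. \<mu> k *\<^sub>R rvec (x(j := y)) k)) < \<epsilon>"
        using True unfolding F_def by blast
      define Y :: "real^'d" where "Y = (\<chi> l. y l)"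
      have rv: "rvec (x(j := y)) k = (if k = j then Y else rvec x k)" for k
        unfolding rvec_def Y_def by simp
      have rvj: "rvec (x(j := y)) j = Y" using rv[of j] by simp
      define s where "s = (\<Sum>k\<in>J - {j}. \<mu> k *\<^sub>R rvec x k)"
      have sumeq: "(\<Sum>k\<in>J. \<mu> k *\<^sub>R rvec (x(j := y)) k) = \<mu> j *\<^sub>R Y + s"
      proof -
        have "(\<Sum>k\<in>J. \<mu> k *\<^sub>R rvec (x(j := y)) k) = \<mu> j *\<^sub>R rvec (x(j := y)) j + (\<Sum>k\<in>J - {j}. \<mu> k *\<^sub>R rvec (x(j := y)) k)"
          by (rule sum.remove[OF fJ jJ])
        also have "(\<Sum>k\<in>J - {j}. \<mu> k *\<^sub>R rvec (x(j := y)) k) = s"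
          unfolding s_def by (rule sum.cong) (auto simp: rv)
        finally show ?thesis by (simp only: rvj)
      qed
      have vs: "u - s \<in> span H"
      proof (rule span_diff)
        show "u \<in> span H" unfolding H_def by (rule span_base) simp
        show "s \<in> span H" unfolding s_def
        proof (rule span_sum)
          fix k assume "k \<in> J - {j}"
          then have "rvec x k \<in> span H" unfolding H_def by (intro span_base) blast
          then show "\<mu> k *\<^sub>R rvec x k \<in> span H" by (rule span_scale)
        qed
      qed
      define Z where "Z = u - (\<Sum>k\<in>J. \<mu> k *\<^sub>R rvec (x(j := y)) k)"
      have mdZ: "norm Z < \<epsilon>" using md unfolding Z_def .
      have Zeq: "Z = (u - s) - \<mu> j *\<^sub>R Y" unfolding Z_def sumeq by simp
      have "w \<bullet> Z = w \<bullet> (u - s) - \<mu> j * (w \<bullet> Y)"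
        unfolding Zeq by (simp add: inner_diff_right)
      also have "w \<bullet> (u - s) = 0" by (rule ow[OF vs])
      finally have wi: "w \<bullet> Z = 0 - \<mu> j * (w \<bullet> Y)" .
      have "\<bar>w \<bullet> Z\<bar> \<le> norm w * norm Z"
        by (rule Cauchy_Schwarz_ineq2)
      then have lt: "\<bar>\<mu> j\<bar> * \<bar>w \<bullet> Y\<bar> < \<epsilon>" using wi nw mdZ by (simp add: abs_mult)
      have "\<bar>w \<bullet> Y\<bar> * 1 \<le> \<bar>w \<bullet> Y\<bar> * (\<bar>\<mu> j\<bar> * K)"
        using m1 by (intro mult_left_mono) auto
      also have "\<dots> = (\<bar>\<mu> j\<bar> * \<bar>w \<bullet> Y\<bar>) * K" by (simp add: mult_ac)
      also have "\<dots> < \<epsilon> * K" using lt K0 by (rule mult_strict_right_mono)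
      finally have "\<bar>w \<bullet> Y\<bar> < \<epsilon> * K" by simp
      then have "y \<in> T" unfolding T_def Y_def using ys by blast
      then show ?thesis using True by (simp add: indicator_def)
    qed
    have "(\<integral>\<^sup>+ y. indicator F (x(j := y)) \<partial>?N j) \<le> (\<integral>\<^sup>+ y. indicator T y \<partial>?N j)"
      by (rule nn_integral_mono) (rule ind)
    also have "\<dots> = emeasure (?N j) T" by (rule nn_integral_indicator[OF Tm])
    also have "\<dots> \<le> ennreal C"
      unfolding T_def C_def Nv_def
      by (rule gauss_vec[OF sp nw]) (use e0 K0 in simp)
    finally show "(\<integral>\<^sup>+ y. indicator F (x(j := y)) \<partial>?N j) \<le> ennreal C" .
  qed
  also have "\<dots> = ennreal C"
  proof -
    interpret PP: prob_space "PiM ({..<n} - {j}) ?N" by (rule prob_space_PiM) (rule Nv_prob[OF sp])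
    show ?thesis by (simp add: PP.emeasure_space_1)
  qed
  finally show ?thesis unfolding F_def C_def .
qed



lemma B_single:
  fixes mu :: "nat \<Rightarrow> real^'d::finite"
  assumes sp: "\<sigma> > 0" and i: "i < n"
  shows "{\<omega> \<in> space (gauss_vectors n mu \<sigma>). 1 \<le> \<bar>\<omega> i k - mu i $ k\<bar>} \<in> sets (gauss_vectors n mu \<sigma>)
     \<and> emeasure (gauss_vectors n mu \<sigma>) {\<omega> \<in> space (gauss_vectors n mu \<sigma>). 1 \<le> \<bar>\<omega> i k - mu i $ k\<bar>}
        \<le> ennreal (sqrt 2 * exp (- 1 / (4 * \<sigma>\<^sup>2)))"
proof -
  let ?N = "Nv mu \<sigma>"
  define Nk where "Nk = (\<lambda>k. density lborel (normal_density (mu i $ k) \<sigma>))"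
  have NvN: "?N i = PiM UNIV Nk" unfolding Nv_def Nk_def ..
  interpret P1: product_prob_space ?N "{..<n}"
    unfolding product_prob_space_def product_prob_space_axioms_def product_sigma_finite_def
    using Nv_prob[OF sp] prob_space_imp_sigma_finite by blast
  interpret P2: product_prob_space Nk UNIV
    unfolding product_prob_space_def product_prob_space_axioms_def product_sigma_finite_def Nk_def
    using prob_space_normal_density sp prob_space_imp_sigma_finite by blast
  define T where "T = {t. 1 \<le> \<bar>t - mu i $ k\<bar>}"
  have Tm: "T \<in> sets (Nk k)" unfolding T_def Nk_def by measurable
  define A where "A = {y \<in> space (PiM UNIV Nk). y k \<in> T}"
  have Am: "A \<in> sets (?N i)"
  proof -
    have "(\<lambda>y. y k) \<in> measurable (PiM UNIV Nk) (Nk k)" by (rule measurable_component_singleton) simp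
    from measurable_sets[OF this Tm] have "(\<lambda>y. y k) -` T \<inter> space (PiM UNIV Nk) \<in> sets (PiM UNIV Nk)" .
    moreover have "(\<lambda>y. y k) -` T \<inter> space (PiM UNIV Nk) = A" unfolding A_def by blast
    ultimately show ?thesis unfolding NvN by (simp only:)
  qed
  have eqB: "{\<omega> \<in> space (gauss_vectors n mu \<sigma>). 1 \<le> \<bar>\<omega> i k - mu i $ k\<bar>}
           = {\<omega> \<in> space (PiM {..<n} ?N). \<omega> i \<in> A}"
  proof -
    have "\<omega> i \<in> space (PiM UNIV Nk)" if "\<omega> \<in> space (PiM {..<n} ?N)" for \<omega>
      using that i unfolding space_PiM NvN[symmetric] by (metis PiE_mem lessThan_iff space_PiM)
    then show ?thesis unfolding A_def T_def gauss_vectors_Nv by blast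
  qed
  have m1: "{\<omega> \<in> space (PiM {..<n} ?N). \<omega> i \<in> A} \<in> sets (PiM {..<n} ?N)"
  proof -
    have "(\<lambda>\<omega>. \<omega> i) \<in> measurable (PiM {..<n} ?N) (?N i)" by (rule measurable_component_singleton) (use i in simp)
    from measurable_sets[OF this Am] have "(\<lambda>\<omega>. \<omega> i) -` A \<inter> space (PiM {..<n} ?N) \<in> sets (PiM {..<n} ?N)" .
    moreover have "(\<lambda>\<omega>. \<omega> i) -` A \<inter> space (PiM {..<n} ?N) = {\<omega> \<in> space (PiM {..<n} ?N). \<omega> i \<in> A}" by blast
    ultimately show ?thesis by (simp only:)
  qed
  have "emeasure (PiM {..<n} ?N) {\<omega> \<in> space (PiM {..<n} ?N). \<omega> i \<in> A} = emeasure (?N i) A"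
    by (rule P1.emeasure_PiM_Collect_single) (use i Am in auto)
  also have "\<dots> = emeasure (PiM UNIV Nk) {y \<in> space (PiM UNIV Nk). y k \<in> T}" unfolding NvN A_def ..
  also have "\<dots> = emeasure (Nk k) T"
    by (rule P2.emeasure_PiM_Collect_single) (use Tm in auto)
  also have "\<dots> \<le> ennreal (sqrt 2 * exp (- 1 / (4 * \<sigma>\<^sup>2)))"
    unfolding Nk_def T_def by (rule gauss_tail[OF sp])
  finally have em: "emeasure (PiM {..<n} ?N) {\<omega> \<in> space (PiM {..<n} ?N). \<omega> i \<in> A} \<le> ennreal (sqrt 2 * exp (- 1 / (4 * \<sigma>\<^sup>2)))" .
  show ?thesis unfolding eqB unfolding gauss_vectors_Nv using m1 em by blast
qed



lemma EJ_meas: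
  fixes c :: "real^'d::finite"
  assumes c0: "c \<noteq> 0" and e0: "0 < \<epsilon>" and epi: "\<epsilon> < pi" and cos0: "0 \<le> cos \<epsilon>"
    and JI: "J \<subseteq> {..<n}" and fJ: "finite J"
  shows "{\<omega> \<in> space (gauss_vectors n mu \<sigma>). set_angle {c} (cone_gen (rvec \<omega>) J) < ereal \<epsilon>}
           \<in> sets (gauss_vectors n mu \<sigma>)"
proof -
  let ?M = "gauss_vectors n mu \<sigma>"
  define Q where "Q = (\<lambda>lam \<omega>. (\<forall>j\<in>J. 0 \<le> lam j) \<and>
      cos \<epsilon> * (norm c * norm (\<Sum>j\<in>J. lam j *\<^sub>R rvec \<omega> j)) < c \<bullet> (\<Sum>j\<in>J. lam j *\<^sub>R rvec \<omega> j))"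
  have eq: "{\<omega> \<in> space ?M. set_angle {c} (cone_gen (rvec \<omega>) J) < ereal \<epsilon>}
        = (\<Union>lam\<in>PiE J (\<lambda>_. \<rat>). {\<omega> \<in> space ?M. Q lam \<omega>})"
  proof -
    have "set_angle {c} (cone_gen (rvec \<omega>) J) < ereal \<epsilon> \<longleftrightarrow> (\<exists>lam\<in>PiE J (\<lambda>_. \<rat>). Q lam \<omega>)" for \<omega>
      unfolding Q_def angle_iff[OF c0 e0 epi] by (rule angle_rat[OF fJ c0 cos0])
    then show ?thesis by blast
  qed
  have cnt: "countable (PiE J (\<lambda>_. \<rat>) :: (nat \<Rightarrow> real) set)"
    by (rule countable_PiE) (use fJ countable_rat in blast)+
  have "{\<omega> \<in> space ?M. Q lam \<omega>} \<in> sets ?M" for lam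
  proof -
    define \<phi> where "\<phi> = (\<lambda>x::real^'d. c \<bullet> x - cos \<epsilon> * (norm c * norm x))"
    have "continuous_on UNIV \<phi>" unfolding \<phi>_def by (intro continuous_intros)
    then have p: "\<phi> \<in> borel_measurable borel" by (rule borel_measurable_continuous_onI)
    have h: "(\<lambda>\<omega>. \<phi> (\<Sum>j\<in>J. lam j *\<^sub>R rvec \<omega> j)) \<in> borel_measurable ?M"
      using measurable_compose[OF sum_rvec_meas[OF JI] p] .
    have ms: "(\<lambda>\<omega>. \<phi> (\<Sum>j\<in>J. lam j *\<^sub>R rvec \<omega> j)) -` {0<..} \<inter> space ?M \<in> sets ?M"
      by (rule measurable_sets[OF h]) (rule greaterThan_borel)
    show ?thesis
    proof (cases "\<forall>j\<in>J. 0 \<le> lam j")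
      case True
      have "{\<omega> \<in> space ?M. Q lam \<omega>} = (\<lambda>\<omega>. \<phi> (\<Sum>j\<in>J. lam j *\<^sub>R rvec \<omega> j)) -` {0<..} \<inter> space ?M"
        unfolding Q_def \<phi>_def using True by auto
      then show ?thesis using ms by (simp only:)
    next
      case False
      have "{\<omega> \<in> space ?M. Q lam \<omega>} = {}" unfolding Q_def using False by blast
      then show ?thesis by (simp only: sets.empty_sets)
    qed
  qed
  then show ?thesis unfolding eq by (rule sets.countable_UN''[OF cnt])
qed



lemma binom_bound: "(n choose m) * m * m \<le> n ^ (m + 1)"
proof (cases "m = 0 \<or> n < m")
  case True
  then show ?thesis
  proof
    assume "m = 0" then show ?thesis by simp
  next
    assume nm: "n < m"
    show ?thesis by (simp add: binomial_eq_0[OF nm])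
  qed
next
  case False
  then have mn: "m \<le> n" and m0: "m \<noteq> 0" by auto
  obtain m' where m: "m = Suc m'" using m0 by (cases m) auto
  obtain n' where n: "n = Suc n'" using m0 mn by (cases n) auto
  have "(n choose m) * m = n * (n' choose m')"
    using Suc_times_binomial[of m' n'] unfolding m n by (simp add: mult.commute)
  also have "\<dots> \<le> n * n' ^ m'"
    using mn unfolding m n by (intro mult_left_mono binomial_le_pow) auto
  also have "\<dots> \<le> n * n ^ m'" unfolding n by (intro mult_left_mono power_mono) auto
  also have "\<dots> = n ^ m" unfolding m by simp
  finally have "(n choose m) * m * m \<le> n ^ m * m" by (rule mult_right_mono) simp
  also have "\<dots> \<le> n ^ m * n" using mn by simp
  also have "\<dots> = n ^ (m + 1)" by (simp only: power_Suc2[symmetric] Suc_eq_plus1)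
  finally show ?thesis .
qed

lemma norm_small:
  fixes v :: "real^'d::finite"
  assumes "\<And>l. \<bar>v $ l\<bar> < 1"
  shows "norm v \<le> sqrt (real CARD('d))"
proof -
  have "norm v = sqrt (\<Sum>l\<in>UNIV. (v $ l)\<^sup>2)" by (simp add: norm_vec_def L2_set_def)
  also have "\<dots> \<le> sqrt (\<Sum>l\<in>(UNIV::'d set). 1)"
  proof (intro real_sqrt_le_mono sum_mono)
    fix l show "(v $ l)\<^sup>2 \<le> 1" using assms[of l] by (simp add: abs_square_le_1)
  qed
  finally show ?thesis by simp
qed

lemma tail_small:
  fixes \<sigma> :: real and n D :: nat
  assumes n2: "n \<ge> 2" and D1: "D \<ge> 1" and sp: "\<sigma> > 0"
    and sb: "\<sigma> \<le> 1 / (4 * sqrt (real D * ln (real n)))"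
  shows "real n * real D * (sqrt 2 * exp (- 1 / (4 * \<sigma>\<^sup>2))) \<le> 1 / real n ^ D"
proof -
  have ln0: "ln (real n) > 0" using n2 by simp
  have L0: "real D * ln (real n) > 0" using ln0 D1 by simp
  have "\<sigma> * (4 * sqrt (real D * ln (real n))) \<le> 1"
    using sb L0 by (simp add: field_simps)
  then have "(\<sigma> * (4 * sqrt (real D * ln (real n))))\<^sup>2 \<le> 1"
    using sp L0 by (simp add: power_le_one)
  then have h: "\<sigma>\<^sup>2 * 16 * (real D * ln (real n)) \<le> 1"
    using L0 by (simp add: power_mult_distrib)
  have "(4 * real D * ln (real n)) * (4 * \<sigma>\<^sup>2) = \<sigma>\<^sup>2 * 16 * (real D * ln (real n))"
    by (simp add: algebra_simps)
  then have "(4 * real D * ln (real n)) * (4 * \<sigma>\<^sup>2) \<le> 1" using h by linarith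
  then have "4 * real D * ln (real n) \<le> 1 / (4 * \<sigma>\<^sup>2)"
    by (subst pos_le_divide_eq) (use sp in auto)
  then have "exp (- 1 / (4 * \<sigma>\<^sup>2)) \<le> exp (- (real (4 * D) * ln (real n)))" by simp
  also have "\<dots> = 1 / real n ^ (4 * D)"
  proof -
    have "exp (real (4 * D) * ln (real n)) = real n ^ (4 * D)"
      using exp_of_nat_mult[of "4 * D" "ln (real n)"] n2 by simp
    then show ?thesis by (simp add: exp_minus inverse_eq_divide)
  qed
  finally have e: "exp (- 1 / (4 * \<sigma>\<^sup>2)) \<le> 1 / real n ^ (4 * D)" .
  have nat_ineq: "2 * D * n \<le> n ^ (3 * D)"
  proof -
    have "2 * D < 2 * 2 ^ D" using less_exp[of D] by simp
    also have "\<dots> = 2 ^ (D + 1)" by simp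
    also have "\<dots> \<le> 2 ^ (3 * D - 1)" using D1 by (intro power_increasing) auto
    also have "\<dots> \<le> n ^ (3 * D - 1)" using n2 by (intro power_mono) auto
    finally have a: "2 * D * n \<le> n ^ (3 * D - 1) * n" by simp
    have e3: "Suc (3 * D - 1) = 3 * D" using D1 by simp
    have "n ^ (3 * D - 1) * n = n ^ (3 * D)" by (simp only: power_Suc2[symmetric] e3)
    then show ?thesis using a by simp
  qed
  have npos: "real n > 0" using n2 by simp
  have "real n * real D * (sqrt 2 * exp (- 1 / (4 * \<sigma>\<^sup>2))) \<le> real n * real D * (2 * (1 / real n ^ (4 * D)))"
  proof (intro mult_left_mono mult_mono e)
    have "sqrt 2 \<le> sqrt ((2::real)\<^sup>2)" by (rule real_sqrt_le_mono) simp
    then show "sqrt 2 \<le> (2::real)" by simp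
  qed auto
  also have "\<dots> = real (2 * D * n) / real n ^ (4 * D)" by simp
  also have "\<dots> \<le> real (n ^ (3 * D)) / real n ^ (4 * D)"
    using nat_ineq npos by (intro divide_right_mono) (simp_all only: of_nat_le_iff zero_le_power less_imp_le)
  also have "\<dots> = 1 / real n ^ D"
  proof -
    have e4: "4 * D = 3 * D + D" by simp
    have "real n ^ (4 * D) = real n ^ (3 * D) * real n ^ D" by (simp only: e4 power_add)
    then show ?thesis using npos by simp
  qed
  finally show ?thesis .
qed



theorem lemma4p2:
  fixes c :: "real^'d::finite" and mu :: "nat \<Rightarrow> real^'d" and n :: nat
    and \<sigma> \<epsilon> :: real
  assumes "c \<noteq> 0"
    and "\<sigma> > 0"
    and "\<sigma> \<le> 1 / (4 * sqrt (real CARD('d) * ln (real n)))"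
    and "\<And>i. i < n \<Longrightarrow> norm (mu i) \<le> 1"
    and "0 < \<epsilon>" and "\<epsilon> \<le> pi / 10"
  defines "E \<equiv> {\<omega> \<in> space (gauss_vectors n mu \<sigma>).
                 \<exists>J. J \<subseteq> {..<n} \<and> card J = CARD('d) - 1 \<and>
                     set_angle {c} (cone_gen (rvec \<omega>) J) < ereal \<epsilon>}"
  shows "E \<in> sets (gauss_vectors n mu \<sigma>) \<and>
         measure (gauss_vectors n mu \<sigma>) E
           \<le> 4 * real CARD('d) * real n ^ CARD('d) * (\<epsilon> / (\<sigma> * sqrt (2 * pi)))
              + 1 / real n ^ CARD('d)"
proof -
  note c0 = assms(1) and sp = assms(2) and sb = assms(3) and mu1 = assms(4)
    and e0 = assms(5) and e10 = assms(6)
  define D where "D = CARD('d)"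
  let ?M = "gauss_vectors n mu \<sigma>"
  interpret PM: prob_space ?M
    unfolding gauss_vectors_Nv by (rule prob_space_PiM) (rule Nv_prob[OF sp])
  have D1: "D \<ge> 1" unfolding D_def by (simp add: Suc_le_eq)
  have epi: "\<epsilon> < pi" using e10 e0 pi_gt_zero by linarith
  have cos0: "0 \<le> cos \<epsilon>"
    using cos_gt_zero_pi[of \<epsilon>] e0 e10 pi_gt_zero by linarith
  have n2: "n \<ge> 2"
  proof (rule ccontr)
    assume "\<not> n \<ge> 2" then have "n = 0 \<or> n = 1" by auto
    then have "ln (real n) = 0" by auto
    then have "\<sigma> \<le> 0" using sb by simp
    with sp show False by simp
  qed
  define JJ where "JJ = {J. J \<subseteq> {..<n} \<and> card J = D - 1}"
  have finJJ: "finite JJ"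
    by (rule finite_subset[of _ "Pow {..<n}"]) (auto simp: JJ_def)
  have JJfin: "finite J" "J \<subseteq> {..<n}" "card J = D - 1" if "J \<in> JJ" for J
    using that finite_subset[of J "{..<n}"] unfolding JJ_def by auto
  have Eeq: "E = (\<Union>J\<in>JJ. {\<omega> \<in> space ?M. set_angle {c} (cone_gen (rvec \<omega>) J) < ereal \<epsilon>})"
    unfolding E_def JJ_def D_def by blast
  have Em: "E \<in> sets ?M"
    unfolding Eeq
    by (rule sets.countable_UN''[OF countable_finite[OF finJJ]])
       (rule EJ_meas[OF c0 e0 epi cos0]; use JJfin in blast)
  define Bik where "Bik = (\<lambda>i k. {\<omega> \<in> space ?M. 1 \<le> \<bar>\<omega> i k - mu i $ k\<bar>})"
  define B where "B = (\<Union>i\<in>{..<n}. \<Union>k\<in>(UNIV::'d set). Bik i k)"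
  have Bikm: "Bik i k \<in> sets ?M" and Bikb: "measure ?M (Bik i k) \<le> sqrt 2 * exp (- 1 / (4 * \<sigma>\<^sup>2))"
    if "i < n" for i k
  proof -
    from B_single[OF sp that, of mu k]
    have a: "Bik i k \<in> sets ?M" and b: "emeasure ?M (Bik i k) \<le> ennreal (sqrt 2 * exp (- 1 / (4 * \<sigma>\<^sup>2)))"
      unfolding Bik_def by blast+
    show "Bik i k \<in> sets ?M" by (rule a)
    have "ennreal (measure ?M (Bik i k)) \<le> ennreal (sqrt 2 * exp (- 1 / (4 * \<sigma>\<^sup>2)))"
      using b PM.emeasure_eq_measure by simp
    then show "measure ?M (Bik i k) \<le> sqrt 2 * exp (- 1 / (4 * \<sigma>\<^sup>2))"
      by (subst (asm) ennreal_le_iff) auto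
  qed
  have Bkm: "(\<Union>k\<in>(UNIV::'d set). Bik i k) \<in> sets ?M" if "i < n" for i
    by (rule sets.countable_UN''[OF countable_finite[OF finite_class.finite_UNIV]]) (rule Bikm[OF that])
  have Bm: "B \<in> sets ?M" unfolding B_def
    by (rule sets.countable_UN''[OF countable_finite[OF finite_lessThan]]) (rule Bkm, simp)
  have mB: "measure ?M B \<le> 1 / real n ^ D"
  proof -
    have "measure ?M B \<le> (\<Sum>i\<in>{..<n}. measure ?M (\<Union>k\<in>(UNIV::'d set). Bik i k))"
      unfolding B_def by (rule measure_UNION_le) (auto intro: Bkm)
    also have "\<dots> \<le> (\<Sum>i\<in>{..<n}. \<Sum>k\<in>(UNIV::'d set). measure ?M (Bik i k))"
      by (intro sum_mono measure_UNION_le) (auto intro: Bikm)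
    also have "\<dots> \<le> (\<Sum>i\<in>{..<n}. \<Sum>k\<in>(UNIV::'d set). sqrt 2 * exp (- 1 / (4 * \<sigma>\<^sup>2)))"
      by (intro sum_mono Bikb) auto
    also have "\<dots> = real n * real D * (sqrt 2 * exp (- 1 / (4 * \<sigma>\<^sup>2)))"
      by (simp add: D_def)
    also have "\<dots> \<le> 1 / real n ^ D"
      by (rule tail_small[OF n2 D1 sp]) (use sb in \<open>simp add: D_def\<close>)
    finally show ?thesis .
  qed
  define K where "K = 2 * (real D - 1) * sqrt (real D)"
  define u where "u = c /\<^sub>R norm c"
  define F where "F = (\<lambda>J j. {\<omega> \<in> space ?M. \<exists>\<mu>\<in>PiE J (\<lambda>_. \<rat>). 1 < \<bar>\<mu> j\<bar> * K \<and>
            norm (u - (\<Sum>k\<in>J. \<mu> k *\<^sub>R rvec \<omega> k)) < \<epsilon>})"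
  define C1 where "C1 = 2 * (\<epsilon> * K) * sqrt (real D) / (\<sigma> * sqrt (2 * pi))"
  have Fm: "F J j \<in> sets ?M" if "J \<in> JJ" for J j
    unfolding F_def by (rule F_meas) (use JJfin[OF that] in auto)
  have mF: "measure ?M (F J j) \<le> C1" if J: "J \<in> JJ" and jJ: "j \<in> J" for J j
  proof -
    have "card J \<ge> 1" using JJfin(1)[OF J] jJ by (metis One_nat_def Suc_leI card_gt_0_iff empty_iff)
    then have D2: "real D \<ge> 2" using JJfin(3)[OF J] by simp
    then have K0: "K > 0" unfolding K_def by simp
    have "emeasure ?M (F J j) \<le> ennreal C1"
      unfolding F_def C1_def D_def
      by (rule F_bound[OF sp e0 K0 JJfin(2)[OF J] JJfin(1)[OF J] jJ]) (use JJfin(3)[OF J] in \<open>simp add: D_def\<close>)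
    then have "ennreal (measure ?M (F J j)) \<le> ennreal C1"
      using PM.emeasure_eq_measure by simp
    moreover have "C1 \<ge> 0" unfolding C1_def using sp e0 K0 by simp
    ultimately show ?thesis by (subst (asm) ennreal_le_iff) auto
  qed
  define U where "U = (\<Union>J\<in>JJ. \<Union>j\<in>J. F J j)"
  have UJm: "(\<Union>j\<in>J. F J j) \<in> sets ?M" if "J \<in> JJ" for J
    by (rule sets.countable_UN''[OF countable_finite[OF JJfin(1)[OF that]]]) (rule Fm[OF that])
  have Um: "U \<in> sets ?M" unfolding U_def
    by (rule sets.countable_UN''[OF countable_finite[OF finJJ]]) (rule UJm)
  have mU: "measure ?M U \<le> real (card JJ) * (real D - 1) * C1"
  proof -
    have "measure ?M U \<le> (\<Sum>J\<in>JJ. measure ?M (\<Union>j\<in>J. F J j))"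
      unfolding U_def by (rule measure_UNION_le[OF finJJ]) (rule UJm)
    also have "\<dots> \<le> (\<Sum>J\<in>JJ. \<Sum>j\<in>J. measure ?M (F J j))"
      by (intro sum_mono measure_UNION_le) (auto intro: Fm JJfin)
    also have "\<dots> \<le> (\<Sum>J\<in>JJ. \<Sum>j\<in>J. C1)"
      by (intro sum_mono mF) auto
    also have "\<dots> = (\<Sum>J\<in>JJ. (real D - 1) * C1)"
    proof (rule sum.cong[OF refl])
      fix J assume J: "J \<in> JJ"
      have "real (card J) = real D - 1" using JJfin(3)[OF J] D1 by simp
      then show "(\<Sum>j\<in>J. C1) = (real D - 1) * C1" by simp
    qed
    also have "\<dots> = real (card JJ) * (real D - 1) * C1" by simp
    finally show ?thesis .
  qed
  have sub: "E \<subseteq> B \<union> U"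
  proof
    fix \<omega> assume "\<omega> \<in> E"
    then obtain J where \<omega>s: "\<omega> \<in> space ?M" and J: "J \<in> JJ"
      and ang: "set_angle {c} (cone_gen (rvec \<omega>) J) < ereal \<epsilon>"
      unfolding E_def JJ_def D_def by blast
    show "\<omega> \<in> B \<union> U"
    proof (cases "\<omega> \<in> B")
      case True then show ?thesis by blast
    next
      case False
      have na: "norm (rvec \<omega> k) \<le> 1 + sqrt (real CARD('d))" if k: "k \<in> J" for k
      proof -
        have kn: "k < n" using JJfin(2)[OF J] k by auto
        have small: "\<bar>\<omega> k l - mu k $ l\<bar> < 1" for l
        proof (rule ccontr)
          assume "\<not> \<bar>\<omega> k l - mu k $ l\<bar> < 1"
          then have "\<omega> \<in> Bik k l" unfolding Bik_def using \<omega>s by simp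
          then have "\<omega> \<in> B" unfolding B_def using kn by blast
          then show False using False by simp
        qed
        define v where "v = rvec \<omega> k - mu k"
        have "\<bar>v $ l\<bar> < 1" for l unfolding v_def rvec_def using small[of l] by simp
        then have nv: "norm v \<le> sqrt (real CARD('d))" by (rule norm_small)
        have "norm (rvec \<omega> k) = norm (mu k + v)" unfolding v_def by simp
        also have "\<dots> \<le> norm (mu k) + norm v" by (rule norm_triangle_ineq)
        also have "\<dots> \<le> 1 + sqrt (real CARD('d))" using mu1[OF kn] nv by simp
        finally show ?thesis .
      qed
      obtain lam where g: "cos \<epsilon> * (norm c * norm (\<Sum>j\<in>J. lam j *\<^sub>R rvec \<omega> j)) < c \<bullet> (\<Sum>j\<in>J. lam j *\<^sub>R rvec \<omega> j)"
        using ang unfolding angle_iff[OF c0 e0 epi] by blast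
      have cJ: "card J = CARD('d) - 1" using JJfin(3)[OF J] unfolding D_def .
      from geom[OF JJfin(1)[OF J] cJ na c0 e0 g]
      obtain j where jJ: "j \<in> J" and "\<exists>\<mu>\<in>PiE J (\<lambda>_. \<rat>).
           1 < \<bar>\<mu> j\<bar> * (2 * (real CARD('d) - 1) * sqrt (real CARD('d))) \<and>
           norm (c /\<^sub>R norm c - (\<Sum>k\<in>J. \<mu> k *\<^sub>R rvec \<omega> k)) < \<epsilon>" by blast
      then have "\<omega> \<in> F J j" unfolding F_def K_def u_def D_def using \<omega>s by blast
      then have "\<omega> \<in> U" unfolding U_def using J jJ by blast
      then show ?thesis by blast
    qed
  qed
  have cardJJ: "card JJ = n choose (D - 1)"
    unfolding JJ_def using n_subsets[of "{..<n}" "D - 1"] by simp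
  define X where "X = \<epsilon> / (\<sigma> * sqrt (2 * pi))"
  have X0: "X \<ge> 0" unfolding X_def using e0 sp by simp
  have C1eq: "C1 = 4 * (real D - 1) * real D * X"
  proof -
    have ss: "sqrt (real D) * sqrt (real D) = real D" by simp
    have gen: "2 * (\<epsilon> * (2 * (real D - 1) * t)) * t / (\<sigma> * sqrt (2 * pi))
        = 4 * (real D - 1) * (t * t) * (\<epsilon> / (\<sigma> * sqrt (2 * pi)))" for t :: real
      by (simp add: field_simps)
    have "C1 = 4 * (real D - 1) * (sqrt (real D) * sqrt (real D)) * X"
      unfolding C1_def K_def X_def by (rule gen)
    then show ?thesis unfolding ss .
  qed
  have bb: "real (n choose (D - 1)) * (real D - 1) * (real D - 1) \<le> real n ^ D"
  proof -
    have "(n choose (D - 1)) * (D - 1) * (D - 1) \<le> n ^ (D - 1 + 1)" by (rule binom_bound)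
    also have "D - 1 + 1 = D" using D1 by simp
    finally have "real ((n choose (D - 1)) * (D - 1) * (D - 1)) \<le> real (n ^ D)" by (simp only: of_nat_le_iff)
    then show ?thesis using D1 by (simp add: of_nat_diff)
  qed
  have "measure ?M E \<le> measure ?M (B \<union> U)"
    by (rule PM.finite_measure_mono[OF sub]) (use Bm Um in blast)
  also have "\<dots> \<le> measure ?M B + measure ?M U" by (rule measure_Un_le[OF Bm Um])
  also have "\<dots> \<le> 1 / real n ^ D + real (card JJ) * (real D - 1) * C1" using mB mU by linarith
  also have "real (card JJ) * (real D - 1) * C1
      = (real (n choose (D - 1)) * (real D - 1) * (real D - 1)) * (4 * real D * X)"
    unfolding cardJJ C1eq by (simp add: algebra_simps)
  also have "\<dots> \<le> real n ^ D * (4 * real D * X)"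
    by (rule mult_right_mono[OF bb]) (use X0 in simp)
  finally have fin: "measure ?M E \<le> 4 * real D * real n ^ D * X + 1 / real n ^ D" by (simp add: algebra_simps)
  show ?thesis using Em fin unfolding D_def X_def by simp
qed


end
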